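(* In the setting described in the context, assume A1, A2 and A3. Suppose there exist a fixed subset $\mathcal K^*\subseteq\{1,\dots,K\}$ and a constant $\delta>0$ such that $\inf_{\mathbf w\in\mathcal W^*}\sum_{k\in\mathcal K^*}w_k\ge\frac12+\delta$ and $$\limsup_{n\to\infty}\Pr\Big(\bigcup_{k\in\mathcal K^*}\{Y\notin\mathcal C_k(\mathbf X;\mathcal D_n)\}\Big)\le\alpha.$$ Then $\liminf_{n\to\infty}\Pr\big(Y\in\mathcal C_{\mathrm{comb}}(\mathbf X;\mathcal D_n)\big)\ge1-\alpha$.
   Context: Setting: fix $K\ge2$ and $\alpha\in(0,1)$. For each sample size $n$, on a common probability space there are a random data set $\mathcal D_n$ and a random test pair $(\mathbf X,Y)$ with $\mathbf X\in\mathcal X\subseteq\mathbb R^p$, $Y\in\mathbb R$. For each $k\in\{1,\dots,K\}$ there is a random prediction set $\mathcal C_k(\mathbf X;\mathcal D_n)\subseteq\mathbb R$, determined by $\mathcal D_n$ and $\mathbf X$, such that the events $\{Y\in\mathcal C_k(\mathbf X;\mathcal D_n)\}$ are measurable. Let $\Delta^{K-1}=\{\mathbf w\in[0,1]^K:w_k\ge0,\sum_k w_k=1\}$ and let $\widehat{\mathbf w}_n=(\widehat w_{n,1},\dots,\widehat w_{n,K})$ be a $\sigma(\mathcal D_n)$-measurable random vector in $\Delta^{K-1}$. Let $\mathcal W^*\subseteq\Delta^{K-1}$ be a nonempty closed convex set; $\|\cdot\|$ is the Euclidean norm. A1: for every $n$ and every $k$, $\Pr(Y\notin\mathcal C_k(\mathbf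 X;\mathcal D_n)\mid\mathcal D_n)\le\alpha$ almost surely. A2: $\inf_{\mathbf w\in\mathcal W^*}\|\widehat{\mathbf w}_n-\mathbf w\|\to0$ in probability as $n\to\infty$. A3: $\mathcal C_{\mathrm{comb}}(\mathbf X;\mathcal D_n):=\{y\in\mathbb R:\sum_{k=1}^K\widehat w_{n,k}\mathbf 1\{y\in\mathcal C_k(\mathbf X;\mathcal D_n)\}>1/2\}$. *)

theory Defs
  imports "HOL-Probability.Probability"
begin

text \<open>Probability simplex over the finite index type 'k (indices 1..K are identified
 with the elements of 'k, K = CARD('k)).\<close>
definition prob_simplex :: "(real ^ 'k::finite) set" where
  "prob_simplex = {w. (\<forall>k. 0 \<le> w $ k) \<and> (\<Sum>k\<in>UNIV. w $ k) = 1}"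

text \<open>Combined (weighted majority vote) prediction set, assumption A3.\<close>
definition comb_set :: "(real ^ 'k::finite) \<Rightarrow> ('k \<Rightarrow> real set) \<Rightarrow> real set" where
  "comb_set w C = {y. (\<Sum>k\<in>UNIV. w $ k * indicator (C k) y) > 1/2}"

definition cond_prob :: "'a measure \<Rightarrow> 'a measure \<Rightarrow> 'a set \<Rightarrow> 'a \<Rightarrow> real" where
  "cond_prob M F A = real_cond_exp M F (indicator A)"

end

theory Submission
  imports Defs
begin

theorem theorem2:
  fixes M :: "'a measure" and Dsp :: "'d measure"
    and D :: "nat \<Rightarrow> 'a \<Rightarrow> 'd"
    and X :: "'a \<Rightarrow> real ^ 'p::finite" and Y :: "'a \<Rightarrow> real"
    and C :: "nat \<Rightarrow> 'k::finite \<Rightarrow> real ^ 'p \<Rightarrow> 'd \<Rightarrow> real set"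
    and w :: "nat \<Rightarrow> 'a \<Rightarrow> real ^ 'k"
    and Wstar :: "(real ^ 'k) set"
    and Kstar :: "'k set"
    and \<alpha> \<delta> :: real
  assumes M: "prob_space M"
    and K2: "CARD('k) \<ge> 2"
    and alpha: "0 < \<alpha>" "\<alpha> < 1"
    and D_meas: "\<And>n. D n \<in> measurable M Dsp"
    and X_meas: "X \<in> borel_measurable M"
    and Y_meas: "Y \<in> borel_measurable M"
    and C_meas: "\<And>n k. {\<omega> \<in> space M. Y \<omega> \<in> C n k (X \<omega>) (D n \<omega>)} \<in> sets M"
    and w_meas: "\<And>n. w n \<in> borel_measurable (vimage_algebra (space M) (D n) Dsp)"
    and w_simplex: "\<And>n \<omega>. \<omega> \<in> space M \<Longrightarrow> w n \<omega> \<in> prob_simplex"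
    and W_ne: "Wstar \<noteq> {}" and W_closed: "closed Wstar" and W_convex: "convex Wstar"
    and W_sub: "Wstar \<subseteq> prob_simplex"
    and A1: "\<And>n k. AE \<omega> in M.
               cond_prob M (vimage_algebra (space M) (D n) Dsp)
                 {\<omega>' \<in> space M. Y \<omega>' \<notin> C n k (X \<omega>') (D n \<omega>')} \<omega> \<le> \<alpha>"
    and A2: "\<And>\<epsilon>. \<epsilon> > 0 \<Longrightarrow>
               (\<lambda>n. measure M {\<omega> \<in> space M. infdist (w n \<omega>) Wstar > \<epsilon>}) \<longlonglongrightarrow> 0"
    and delta: "\<delta> > 0"
    and Kstar_weight: "(INF v\<in>Wstar. \<Sum>k\<in>Kstar. v $ k) \<ge> 1/2 + \<delta>"
    and Kstar_cov: "limsup (\<lambda>n. ereal (measure M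
               {\<omega> \<in> space M. \<exists>k\<in>Kstar. Y \<omega> \<notin> C n k (X \<omega>) (D n \<omega>)})) \<le> ereal \<alpha>"
  shows "liminf (\<lambda>n. ereal (measure M
               {\<omega> \<in> space M. Y \<omega> \<in> comb_set (w n \<omega>) (\<lambda>k. C n k (X \<omega>) (D n \<omega>))}))
           \<ge> ereal (1 - \<alpha>)"
proof -
  interpret prob_space M by (rule M)
  define c where "c = real (card Kstar) + 1"
  have c_pos: "c > 0" unfolding c_def by simp
  define \<epsilon> where "\<epsilon> = \<delta> / (4 * c)"
  have eps_pos: "\<epsilon> > 0" unfolding \<epsilon>_def using delta c_pos by simp
  have ce: "c * (2 * \<epsilon>) < \<delta>" unfolding \<epsilon>_def using delta c_pos by (simp add: field_simps)
  define Ec where "Ec n = {\<omega> \<in> space M. \<exists>k\<in>Kstar. Y \<omega> \<notin> C n k (X \<omega>) (D n \<omega>)}" for n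
  define Gc where "Gc n = {\<omega> \<in> space M. infdist (w n \<omega>) Wstar > \<epsilon>}" for n
  define Cb where "Cb n = {\<omega> \<in> space M. Y \<omega> \<in> comb_set (w n \<omega>) (\<lambda>k. C n k (X \<omega>) (D n \<omega>))}" for n
  have wM: "w n \<in> borel_measurable M" for n
  proof -
    have "sets (vimage_algebra (space M) (D n) Dsp) \<subseteq> sets M"
      using D_meas[of n] unfolding measurable_iff_sets by (rule conjunct2)
    then have "subalgebra M (vimage_algebra (space M) (D n) Dsp)"
      unfolding subalgebra_def by simp
    then show ?thesis using w_meas by (rule measurable_from_subalg)
  qed
  have Ec_sets: "Ec n \<in> sets M" for n
  proof -
    have "Ec n = (\<Union>k\<in>Kstar. space M - {\<omega> \<in> space M. Y \<omega> \<in> C n k (X \<omega>) (D n \<omega>)})"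
      unfolding Ec_def by auto
    also have "\<dots> \<in> sets M" by (intro sets.finite_UN ballI sets.Diff sets.top C_meas) simp
    finally show ?thesis .
  qed
  have Gc_sets: "Gc n \<in> sets M" for n
  proof -
    have op: "open {x::real^'k. infdist x Wstar > \<epsilon>}"
      by (intro open_Collect_less continuous_intros)
    have "Gc n = w n -` {x. infdist x Wstar > \<epsilon>} \<inter> space M" unfolding Gc_def by auto
    also have "\<dots> \<in> sets M" using measurable_sets[OF wM borel_open[OF op]] by simp
    finally show ?thesis .
  qed
  have Cb_sets: "Cb n \<in> sets M" for n
  proof -
    let ?S = "\<lambda>k. {\<omega> \<in> space M. Y \<omega> \<in> C n k (X \<omega>) (D n \<omega>)}"
    have "Cb n = {\<omega> \<in> space M. (\<Sum>k\<in>UNIV. w n \<omega> $ k * indicator (?S k) \<omega>) > 1/2}"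
      unfolding Cb_def comb_set_def by (auto simp: indicator_def)
    also have "\<dots> \<in> sets M"
    proof (rule borel_measurable_less)
      show "(\<lambda>\<omega>. 1/2::real) \<in> borel_measurable M" by simp
      have "(\<lambda>\<omega>. w n \<omega> $ k) \<in> borel_measurable M" for k
        using measurable_compose[OF wM borel_measurable_nth] by simp
      then show "(\<lambda>\<omega>. \<Sum>k\<in>UNIV. w n \<omega> $ k * indicator (?S k) \<omega>) \<in> borel_measurable M"
        using C_meas by (intro borel_measurable_sum borel_measurable_times borel_measurable_indicator) auto
    qed
    finally show ?thesis .
  qed
  have incl: "space M - (Ec n \<union> Gc n) \<subseteq> Cb n" for n
  proof
    fix \<omega> assume om: "\<omega> \<in> space M - (Ec n \<union> Gc n)"
    then have sp: "\<omega> \<in> space M" and inK: "\<And>k. k \<in> Kstar \<Longrightarrow> Y \<omega> \<in> C n k (X \<omega>) (D n \<omega>)"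
      and idl: "infdist (w n \<omega>) Wstar \<le> \<epsilon>" unfolding Ec_def Gc_def by auto
    let ?u = "w n \<omega>"
    have u_nn: "\<And>k. 0 \<le> ?u $ k" using w_simplex[OF sp] unfolding prob_simplex_def by auto
    have bdd: "bdd_below ((\<lambda>a. dist ?u a) ` Wstar)" by (rule bdd_belowI[of _ 0]) auto
    have "(INF a\<in>Wstar. dist ?u a) < 2 * \<epsilon>" using idl eps_pos infdist_notempty[OF W_ne] by simp
    then obtain v where vW: "v \<in> Wstar" and dv: "dist ?u v < 2 * \<epsilon>"
      using cINF_less_iff[OF W_ne bdd] by blast
    have v_nn: "\<And>k. 0 \<le> v $ k" using W_sub vW unfolding prob_simplex_def by auto
    have bdd2: "bdd_below ((\<lambda>v. \<Sum>k\<in>Kstar. v $ k) ` Wstar)"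
      by (rule bdd_belowI[of _ 0]) (use W_sub in \<open>force intro!: sum_nonneg simp: prob_simplex_def\<close>)
    have vge: "1/2 + \<delta> \<le> (\<Sum>k\<in>Kstar. v $ k)"
      using Kstar_weight cINF_lower[OF bdd2 vW] by linarith
    have comp: "\<bar>v $ k - ?u $ k\<bar> \<le> dist ?u v" for k
      using component_le_norm_cart[of "v - ?u" k] by (simp add: dist_norm norm_minus_commute)
    have "(\<Sum>k\<in>Kstar. v $ k) - (\<Sum>k\<in>Kstar. ?u $ k) = (\<Sum>k\<in>Kstar. v $ k - ?u $ k)"
      by (simp add: sum_subtractf)
    also have "\<dots> \<le> (\<Sum>k\<in>Kstar. dist ?u v)"
    proof (rule sum_mono)
      fix k show "v $ k - ?u $ k \<le> dist ?u v"
        using comp[of k] abs_ge_self[of "v $ k - ?u $ k"] by linarith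
    qed
    also have "\<dots> = real (card Kstar) * dist ?u v" by simp
    also have "\<dots> \<le> c * (2 * \<epsilon>)"
      unfolding c_def using dv by (intro mult_mono) (auto simp: eps_pos less_imp_le)
    finally have "(\<Sum>k\<in>Kstar. ?u $ k) > 1/2"
      using vge ce by linarith
    also have "(\<Sum>k\<in>Kstar. ?u $ k) = (\<Sum>k\<in>Kstar. ?u $ k * indicator (C n k (X \<omega>) (D n \<omega>)) (Y \<omega>))"
      using inK by (intro sum.cong) auto
    also have "\<dots> \<le> (\<Sum>k\<in>UNIV. ?u $ k * indicator (C n k (X \<omega>) (D n \<omega>)) (Y \<omega>))"
      by (rule sum_mono2) (auto simp: u_nn)
    finally show "\<omega> \<in> Cb n" unfolding Cb_def comb_set_def using sp by simp
  qed
  have lb: "measure M (Cb n) \<ge> 1 - measure M (Ec n) - measure M (Gc n)" for n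
  proof -
    have "measure M (Ec n \<union> Gc n) \<le> measure M (Ec n) + measure M (Gc n)"
      using Ec_sets Gc_sets by (intro measure_Un_le) auto
    moreover have "measure M (space M - (Ec n \<union> Gc n)) = 1 - measure M (Ec n \<union> Gc n)"
      using Ec_sets Gc_sets prob_compl by auto
    moreover have "measure M (space M - (Ec n \<union> Gc n)) \<le> measure M (Cb n)"
      using incl Cb_sets by (intro finite_measure_mono) auto
    ultimately show ?thesis by linarith
  qed
  have "ereal (1 - \<alpha>) \<le> liminf (\<lambda>n. ereal (measure M (Cb n)))"
    unfolding le_Liminf_iff
  proof (intro allI impI)
    fix y assume "y < ereal (1 - \<alpha>)"
    then obtain r where ry: "y < ereal r" and r: "r < 1 - \<alpha>"
      using ereal_dense2 by (metis less_ereal.simps(1))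
    define e where "e = (1 - \<alpha> - r) / 2"
    have e: "e > 0" unfolding e_def using r by simp
    have "\<forall>\<^sub>F n in sequentially. ereal (measure M (Ec n)) < ereal (\<alpha> + e)"
    proof -
      have "ereal (\<alpha> + e) > ereal \<alpha>" using e by simp
      then show ?thesis using Kstar_cov[unfolded Limsup_le_iff] unfolding Ec_def by blast
    qed
    moreover have "\<forall>\<^sub>F n in sequentially. measure M (Gc n) < e"
      using order_tendstoD(2)[OF A2[OF eps_pos] e] unfolding Gc_def by simp
    ultimately show "\<forall>\<^sub>F n in sequentially. y < ereal (measure M (Cb n))"
    proof eventually_elim
      case (elim n)
      then have "measure M (Cb n) > r" using lb[of n] unfolding e_def by (simp add: field_simps)
      then show ?case using ry by (meson less_ereal.simps(1) order.strict_trans)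
    qed
  qed
  then show ?thesis unfolding Cb_def .
qed

end
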